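(* Let $(X_1,\dots,X_d)$ be a non-degenerate $d$-dimensional $1$-Meixner random vector with $E[X_k]=0$ and $E[X_iX_j]=\delta_{i,j}$ for all $i,j,k$, and let $\alpha_{i,j,k}$ be the real numbers with $[U_i,X_j]=\sum_{k}\alpha_{i,j,k}X_k+\beta_{i,j}I$. Then for all $i,j,k\in\{1,\dots,d\}$, $E[X_iX_jX_k]=2\alpha_{i,j,k}$.
   Context: Let $X_1,\dots,X_d$ be real random variables on $(\Omega,\mathcal F,P)$ with finite moments of all orders. $F$ is the space of polynomial random variables $f(X_1,\dots,X_d)$ (complex coefficients), $F_n$ those of degree $\le n$, $G_0=F_0$, $G_n=F_n\ominus F_{n-1}$ in $L^2(P)$. For $f\in G_n$, $X_if\in G_{n-1}\oplus G_n\oplus G_{n+1}$; its components define $a^-(i)f,a^0(i)f,a^+(i)f$ respectively, extended linearly to $F$. $U_i:=a^-(i)+\tfrac12a^0(i)$. $(X_1,\dots,X_d)$ is a $d$-dimensional $1$-Meixner random vector if there are reals $\alpha_{i,j,k},\beta_{i,j}$ with $[U_i,X_j]=\sum_k\alpha_{i,j,k}X_k+\beta_{i,j}I$ on $F$ for all $i,j$ (with $X_j$ the multiplication operator, $I$ the identity); it is non-degenerate if $I,X_1,\dots,X_d$ are linearly independent operators on $F$. *)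

theory Defs
  imports "HOL-Probability.Probability"
begin

text \<open>Random variables X i indexed by a finite type 'i (d = CARD('i)), on a
probability space M. Polynomial random variables are complex-valued functions
on the sample space; L2 equalities are read almost everywhere.\<close>

definition monoRV :: "('i::finite \<Rightarrow> 'a \<Rightarrow> real) \<Rightarrow> ('i \<Rightarrow> nat) \<Rightarrow> 'a \<Rightarrow> complex" where
  "monoRV X m \<omega> = (\<Prod>i\<in>UNIV. complex_of_real (X i \<omega>) ^ m i)"

definition polyF :: "('i::finite \<Rightarrow> 'a \<Rightarrow> real) \<Rightarrow> nat \<Rightarrow> ('a \<Rightarrow> complex) set" where
  "polyF X n = {f. \<exists>S c. finite S \<and> (\<forall>m\<in>S. sum m UNIV \<le> n) \<and>
                       f = (\<lambda>\<omega>. \<Sum>m\<in>S. c m * monoRV X m \<omega>)}"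

definition polyAll :: "('i::finite \<Rightarrow> 'a \<Rightarrow> real) \<Rightarrow> ('a \<Rightarrow> complex) set" where
  "polyAll X = (\<Union>n. polyF X n)"

definition ipL2 :: "'a measure \<Rightarrow> ('a \<Rightarrow> complex) \<Rightarrow> ('a \<Rightarrow> complex) \<Rightarrow> complex" where
  "ipL2 M f g = integral\<^sup>L M (\<lambda>\<omega>. f \<omega> * cnj (g \<omega>))"

definition polyG :: "'a measure \<Rightarrow> ('i::finite \<Rightarrow> 'a \<Rightarrow> real) \<Rightarrow> nat \<Rightarrow> ('a \<Rightarrow> complex) set" where
  "polyG M X n = (if n = 0 then polyF X 0
                  else {f \<in> polyF X n. \<forall>g\<in>polyF X (n - 1). ipL2 M f g = 0})"

definition projG :: "'a measure \<Rightarrow> ('i::finite \<Rightarrow> 'a \<Rightarrow> real) \<Rightarrow> nat \<Rightarrow> ('a \<Rightarrow> complex) \<Rightarrow> 'a \<Rightarrow> complex" where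
  "projG M X n f = (SOME g. g \<in> polyG M X n \<and>
                      (\<forall>h\<in>polyG M X n. ipL2 M (\<lambda>\<omega>. f \<omega> - g \<omega>) h = 0))"

definition pdeg :: "('i::finite \<Rightarrow> 'a \<Rightarrow> real) \<Rightarrow> ('a \<Rightarrow> complex) \<Rightarrow> nat" where
  "pdeg X f = (LEAST n. f \<in> polyF X n)"

definition mulX :: "('i::finite \<Rightarrow> 'a \<Rightarrow> real) \<Rightarrow> 'i \<Rightarrow> ('a \<Rightarrow> complex) \<Rightarrow> 'a \<Rightarrow> complex" where
  "mulX X i f = (\<lambda>\<omega>. complex_of_real (X i \<omega>) * f \<omega>)"

text \<open>a^-(i) and a^0(i), extended linearly to F via the decomposition
f = sum_n P_n f with P_n f in G_n: a^-(i) f = sum_n P_(n-1)(X_i P_n f),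
a^0(i) f = sum_n P_n (X_i P_n f).\<close>
definition aMinus :: "'a measure \<Rightarrow> ('i::finite \<Rightarrow> 'a \<Rightarrow> real) \<Rightarrow> 'i \<Rightarrow> ('a \<Rightarrow> complex) \<Rightarrow> 'a \<Rightarrow> complex" where
  "aMinus M X i f = (\<lambda>\<omega>. \<Sum>n\<in>{1..pdeg X f}.
       projG M X (n - 1) (mulX X i (projG M X n f)) \<omega>)"

definition aZero :: "'a measure \<Rightarrow> ('i::finite \<Rightarrow> 'a \<Rightarrow> real) \<Rightarrow> 'i \<Rightarrow> ('a \<Rightarrow> complex) \<Rightarrow> 'a \<Rightarrow> complex" where
  "aZero M X i f = (\<lambda>\<omega>. \<Sum>n\<le>pdeg X f. projG M X n (mulX X i (projG M X n f)) \<omega>)"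

definition opU :: "'a measure \<Rightarrow> ('i::finite \<Rightarrow> 'a \<Rightarrow> real) \<Rightarrow> 'i \<Rightarrow> ('a \<Rightarrow> complex) \<Rightarrow> 'a \<Rightarrow> complex" where
  "opU M X i f = (\<lambda>\<omega>. aMinus M X i f \<omega> + aZero M X i f \<omega> / 2)"

definition finite_moments :: "'a measure \<Rightarrow> ('i \<Rightarrow> 'a \<Rightarrow> real) \<Rightarrow> bool" where
  "finite_moments M X \<longleftrightarrow> (\<forall>i. X i \<in> borel_measurable M \<and>
                            (\<forall>n::nat. integrable M (\<lambda>\<omega>. \<bar>X i \<omega>\<bar> ^ n)))"

definition meixner_rel :: "'a measure \<Rightarrow> ('i::finite \<Rightarrow> 'a \<Rightarrow> real) \<Rightarrow>
    ('i \<Rightarrow> 'i \<Rightarrow> 'i \<Rightarrow> real) \<Rightarrow> ('i \<Rightarrow> 'i \<Rightarrow> real) \<Rightarrow> bool" where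
  "meixner_rel M X \<alpha> \<beta> \<longleftrightarrow> (\<forall>i j. \<forall>f\<in>polyAll X. AE \<omega> in M.
      opU M X i (mulX X j f) \<omega> - mulX X j (opU M X i f) \<omega> =
      (\<Sum>k\<in>UNIV. complex_of_real (\<alpha> i j k) * mulX X k f \<omega>) + complex_of_real (\<beta> i j) * f \<omega>)"

definition nondegenerate :: "'a measure \<Rightarrow> ('i::finite \<Rightarrow> 'a \<Rightarrow> real) \<Rightarrow> bool" where
  "nondegenerate M X \<longleftrightarrow> (\<forall>(c0::complex) (c::'i \<Rightarrow> complex).
      (\<forall>f\<in>polyAll X. AE \<omega> in M. c0 * f \<omega> + (\<Sum>k\<in>UNIV. c k * mulX X k f \<omega>) = 0)
      \<longrightarrow> c0 = 0 \<and> (\<forall>k. c k = 0))"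

end

theory Submission
  imports Defs
begin


definition dlt :: "'i \<Rightarrow> 'i \<Rightarrow> nat" where "dlt k = (\<lambda>i. if i = k then 1 else 0)"

lemma sum_le1_cases:
  fixes m :: "'i::finite \<Rightarrow> nat"
  assumes "sum m UNIV \<le> 1"
  shows "m = (\<lambda>_. 0) \<or> (\<exists>k. m = dlt k)"
proof (cases "\<exists>k. m k \<noteq> 0")
  case False then show ?thesis by auto
next
  case True
  then obtain k where k: "m k \<noteq> 0" by blast
  have s: "sum m UNIV = m k + sum m (UNIV - {k})"
    by (simp add: sum.remove)
  have "m k = 1" using s assms k by linarith
  moreover have "sum m (UNIV - {k}) = 0" using s assms k by linarith
  hence "\<forall>i. i \<noteq> k \<longrightarrow> m i = 0" by simp
  ultimately have "m = dlt k" unfolding dlt_def by auto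
  then show ?thesis by blast
qed

lemma monoRV_zero: "monoRV X (\<lambda>_. 0) = (\<lambda>_. 1)"
  by (simp add: monoRV_def fun_eq_iff)

lemma monoRV_dlt: "monoRV X (dlt k) = (\<lambda>\<omega>. complex_of_real (X k \<omega>))"
proof -
  have "\<And>\<omega>. (\<Prod>i\<in>UNIV. complex_of_real (X i \<omega>) ^ dlt k i) = (\<Prod>i\<in>UNIV. if i = k then complex_of_real (X i \<omega>) else 1)"
    by (rule prod.cong) (auto simp: dlt_def)
  then show ?thesis by (simp add: monoRV_def fun_eq_iff)
qed

lemma polyF1_repr:
  fixes X :: "'i::finite \<Rightarrow> 'a \<Rightarrow> real"
  assumes "finite S" "\<forall>m\<in>S. sum m UNIV \<le> 1"
  shows "\<exists>c0 d. (\<lambda>\<omega>. \<Sum>m\<in>S. c m * monoRV X m \<omega>) = (\<lambda>\<omega>. c0 + (\<Sum>k\<in>UNIV. d k * complex_of_real (X k \<omega>)))"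
  using assms
proof (induction S rule: finite_induct)
  case empty
  show ?case by (rule exI[of _ 0], rule exI[of _ "\<lambda>_. 0"]) simp
next
  case (insert m S)
  then obtain c0 d where cd: "(\<lambda>\<omega>. \<Sum>m\<in>S. c m * monoRV X m \<omega>) = (\<lambda>\<omega>. c0 + (\<Sum>k\<in>UNIV. d k * complex_of_real (X k \<omega>)))"
    by auto
  have eq: "(\<lambda>\<omega>. \<Sum>m\<in>insert m S. c m * monoRV X m \<omega>) = (\<lambda>\<omega>. c m * monoRV X m \<omega> + (c0 + (\<Sum>k\<in>UNIV. d k * complex_of_real (X k \<omega>))))"
    using insert(1,2) cd by (simp add: fun_eq_iff)
  from sum_le1_cases[of m] insert(4) consider "m = (\<lambda>_. 0)" | k where "m = dlt k" by auto
  then show ?case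
  proof cases
    case 1
    show ?thesis unfolding eq unfolding 1 monoRV_zero
      by (rule exI[of _ "c (\<lambda>_. 0) + c0"], rule exI[of _ d]) (simp add: algebra_simps)
  next
    case 2
    have h: "\<And>\<omega>. (\<Sum>i\<in>UNIV. (d i + (if i = k then c (dlt k) else 0)) * complex_of_real (X i \<omega>))
         = (\<Sum>i\<in>UNIV. d i * complex_of_real (X i \<omega>)) + c (dlt k) * complex_of_real (X k \<omega>)"
    proof -
      fix \<omega>
      have "(\<Sum>i\<in>UNIV. (if i = k then c (dlt k) else 0) * complex_of_real (X i \<omega>)) = (\<Sum>i\<in>UNIV. if i = k then c (dlt k) * complex_of_real (X i \<omega>) else 0)"
        by (rule sum.cong) auto
      also have "\<dots> = c (dlt k) * complex_of_real (X k \<omega>)" by simp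
      finally show "?thesis \<omega>" by (simp add: distrib_right sum.distrib)
    qed
    show ?thesis unfolding eq unfolding 2 monoRV_dlt
      by (intro exI[of _ c0] exI[of _ "\<lambda>i. d i + (if i = k then c (dlt k) else 0)"]) (simp only: h fun_eq_iff, simp add: algebra_simps)
  qed
qed

lemma polyF1_E:
  fixes X :: "'i::finite \<Rightarrow> 'a \<Rightarrow> real"
  assumes "f \<in> polyF X 1"
  obtains c0 d where "f = (\<lambda>\<omega>. c0 + (\<Sum>k\<in>UNIV. d k * complex_of_real (X k \<omega>)))"
  using assms polyF1_repr unfolding polyF_def by fastforce

lemma polyF0_E:
  fixes X :: "'i::finite \<Rightarrow> 'a \<Rightarrow> real"
  assumes "f \<in> polyF X 0"
  obtains c where "f = (\<lambda>\<omega>. c)"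
proof -
  from assms obtain S c where S: "finite S" "\<forall>m\<in>S. sum m UNIV \<le> 0" "f = (\<lambda>\<omega>. \<Sum>m\<in>S. c m * monoRV X m \<omega>)"
    unfolding polyF_def by blast
  have "\<forall>m\<in>S. m = (\<lambda>_. 0)" using S(2) by (auto simp: fun_eq_iff)
  hence "\<forall>m\<in>S. monoRV X m = (\<lambda>_. 1)" using monoRV_zero[of X] by auto
  hence "f = (\<lambda>\<omega>. \<Sum>m\<in>S. c m)" using S(3) by (auto simp: fun_eq_iff intro!: sum.cong)
  then show ?thesis using that by blast
qed

lemma const_polyF0: "(\<lambda>_. c) \<in> polyF (X::'i::finite \<Rightarrow> 'a \<Rightarrow> real) 0"
  unfolding polyF_def
  by (rule CollectI, rule exI[of _ "{\<lambda>_. 0}"], rule exI[of _ "\<lambda>_. c"]) (simp add: monoRV_zero)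

lemma lin_polyF1: "(\<lambda>\<omega>. \<Sum>k\<in>UNIV. d k * complex_of_real (X k \<omega>)) \<in> polyF (X::'i::finite \<Rightarrow> 'a \<Rightarrow> real) 1"
proof -
  have inj: "inj (dlt::'i \<Rightarrow> _)" unfolding inj_def dlt_def by (metis zero_neq_one)
  have s: "\<forall>m\<in>range (dlt::'i \<Rightarrow> _). sum m UNIV \<le> 1"
    by (auto simp: dlt_def)
  have e: "(\<lambda>\<omega>. \<Sum>k\<in>UNIV. d k * complex_of_real (X k \<omega>)) = (\<lambda>\<omega>. \<Sum>m\<in>range dlt. d (inv dlt m) * monoRV X m \<omega>)"
  proof
    fix \<omega>
    show "(\<Sum>k\<in>UNIV. d k * complex_of_real (X k \<omega>)) = (\<Sum>m\<in>range dlt. d (inv dlt m) * monoRV X m \<omega>)"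
      by (simp only: sum.reindex[OF inj] o_def monoRV_dlt inv_f_f[OF inj])
  qed
  show ?thesis unfolding polyF_def
    apply (rule CollectI)
    apply (rule exI[of _ "range dlt"])
    apply (rule exI[of _ "\<lambda>m. d (inv dlt m)"])
    using s e by simp
qed



lemma ineq2: "\<bar>(a::real) * b\<bar> \<le> \<bar>a\<bar>^2 + \<bar>b\<bar>^2"
proof -
  have "0 \<le> (\<bar>a\<bar> - \<bar>b\<bar>)^2" by simp
  hence "2 * (\<bar>a\<bar> * \<bar>b\<bar>) \<le> \<bar>a\<bar>^2 + \<bar>b\<bar>^2" by (simp add: power2_diff)
  moreover have "0 \<le> \<bar>a\<bar> * \<bar>b\<bar>" by simp
  ultimately show ?thesis by (simp only: abs_mult)
qed

lemma ineq3: "\<bar>(a::real) * b * c\<bar> \<le> \<bar>a\<bar>^3 + \<bar>b\<bar>^3 + \<bar>c\<bar>^3"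
proof -
  define x y z where "x = \<bar>a\<bar>" "y = \<bar>b\<bar>" "z = \<bar>c\<bar>"
  have p: "x \<ge> 0" "y \<ge> 0" "z \<ge> 0" unfolding x_y_z_def by auto
  define w where "w = max x (max y z)"
  have w: "x \<le> w" "y \<le> w" "z \<le> w" unfolding w_def by auto
  have "x * y \<le> w * w" using p w by (intro mult_mono) auto
  hence "x * y * z \<le> w * w * w" using p w by (intro mult_mono) auto
  also have "\<dots> = w^3" by (simp add: power3_eq_cube)
  also have "w^3 \<le> x^3 + y^3 + z^3"
  proof -
    have c: "0 \<le> x^3" "0 \<le> y^3" "0 \<le> z^3" using p by auto
    have "w = x \<or> w = y \<or> w = z" unfolding w_def by linarith
    then show ?thesis using c by auto
  qed
  finally show ?thesis unfolding x_y_z_def by (simp add: abs_mult)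
qed



context
  fixes M :: "'a measure" and X :: "'i::finite \<Rightarrow> 'a \<Rightarrow> real"
  assumes P: "prob_space M"
    and fm: "finite_moments M X"
    and E0: "\<And>k. integral\<^sup>L M (X k) = 0"
    and orth: "\<And>i j. integral\<^sup>L M (\<lambda>\<omega>. X i \<omega> * X j \<omega>) = (if i = j then 1 else 0)"
begin

lemma measX[measurable]: "X k \<in> borel_measurable M"
  using fm unfolding finite_moments_def by blast

lemma intpow: "integrable M (\<lambda>\<omega>. \<bar>X i \<omega>\<bar> ^ n)"
  using fm unfolding finite_moments_def by blast

lemma int1: "integrable M (X k)"
  using intpow[of k 1] integrable_abs_iff[OF measX] by simp

lemma int2: "integrable M (\<lambda>\<omega>. X i \<omega> * X j \<omega>)"
proof (rule Bochner_Integration.integrable_bound[OF Bochner_Integration.integrable_add[OF intpow[of i 2] intpow[of j 2]]])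
  show "(\<lambda>\<omega>. X i \<omega> * X j \<omega>) \<in> borel_measurable M" by measurable
  show "AE x in M. norm (X i x * X j x) \<le> norm (\<bar>X i x\<bar> ^ 2 + \<bar>X j x\<bar> ^ 2)"
    using ineq2 by (auto intro!: AE_I2 simp del: power2_abs) 
qed

lemma int3: "integrable M (\<lambda>\<omega>. X i \<omega> * X j \<omega> * X k \<omega>)"
proof (rule Bochner_Integration.integrable_bound[OF Bochner_Integration.integrable_add[OF Bochner_Integration.integrable_add[OF intpow[of i 3] intpow[of j 3]] intpow[of k 3]]])
  show "(\<lambda>\<omega>. X i \<omega> * X j \<omega> * X k \<omega>) \<in> borel_measurable M" by measurable
  show "AE x in M. norm (X i x * X j x * X k x) \<le> norm (\<bar>X i x\<bar> ^ 3 + \<bar>X j x\<bar> ^ 3 + \<bar>X k x\<bar> ^ 3)"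
  proof (rule AE_I2)
    fix x
    have "0 \<le> \<bar>X i x\<bar> ^ 3 + \<bar>X j x\<bar> ^ 3 + \<bar>X k x\<bar> ^ 3" by simp
    then show "norm (X i x * X j x * X k x) \<le> norm (\<bar>X i x\<bar> ^ 3 + \<bar>X j x\<bar> ^ 3 + \<bar>X k x\<bar> ^ 3)"
      using ineq3[of "X i x" "X j x" "X k x"] by simp
  qed
qed

lemma finM: "finite_measure M" using P by (simp add: prob_space_def)

lemma intc: "integrable M (\<lambda>_. c::'b::{banach,second_countable_topology})"
  using finite_measure.integrable_const[OF finM] .

lemma meas1: "measure M (space M) = 1"
  using P prob_space.prob_space by blast

lemma projG0:
  assumes f: "integrable M f"
  shows "projG M X 0 f = (\<lambda>_. integral\<^sup>L M f)"
  unfolding projG_def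
proof (rule some_equality)
  show "(\<lambda>_. integral\<^sup>L M f) \<in> polyG M X 0 \<and> (\<forall>h\<in>polyG M X 0. ipL2 M (\<lambda>\<omega>. f \<omega> - integral\<^sup>L M f) h = 0)"
  proof (intro conjI ballI)
    show "(\<lambda>_. integral\<^sup>L M f) \<in> polyG M X 0" by (simp add: polyG_def const_polyF0)
    fix h assume "h \<in> polyG M X 0"
    then obtain e where e: "h = (\<lambda>_. e)" by (auto simp: polyG_def elim: polyF0_E)
    show "ipL2 M (\<lambda>\<omega>. f \<omega> - integral\<^sup>L M f) h = 0"
      unfolding ipL2_def e using f by (simp add: meas1 left_diff_distrib Bochner_Integration.integral_diff intc)
  qed
next
  fix g assume g: "g \<in> polyG M X 0 \<and> (\<forall>h\<in>polyG M X 0. ipL2 M (\<lambda>\<omega>. f \<omega> - g \<omega>) h = 0)"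
  then obtain c where c: "g = (\<lambda>_. c)" by (auto simp: polyG_def elim: polyF0_E)
  have "(\<lambda>_. 1) \<in> polyG M X 0" by (simp add: polyG_def const_polyF0)
  with g have "ipL2 M (\<lambda>\<omega>. f \<omega> - g \<omega>) (\<lambda>_. 1) = 0" by blast
  then have "integral\<^sup>L M f - c = 0" unfolding ipL2_def c using f by (simp add: meas1 Bochner_Integration.integral_diff intc)
  then show "g = (\<lambda>_. integral\<^sup>L M f)" using c by simp
qed

lemma ipL2_lin:
  assumes F: "\<And>l. integrable M (\<lambda>\<omega>. F \<omega> * X l \<omega>)"
  shows "ipL2 M (\<lambda>\<omega>. complex_of_real (F \<omega>) - (\<Sum>k\<in>UNIV. a k * complex_of_real (X k \<omega>)))
                (\<lambda>\<omega>. \<Sum>l\<in>UNIV. d l * complex_of_real (X l \<omega>))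
         = (\<Sum>l\<in>UNIV. cnj (d l) * (complex_of_real (\<integral>\<omega>. F \<omega> * X l \<omega> \<partial>M) - a l))"
proof -
  have pw: "(complex_of_real (F \<omega>) - (\<Sum>k\<in>UNIV. a k * complex_of_real (X k \<omega>))) * cnj (\<Sum>l\<in>UNIV. d l * complex_of_real (X l \<omega>))
     = (\<Sum>l\<in>UNIV. cnj (d l) * (complex_of_real (F \<omega> * X l \<omega>) - (\<Sum>k\<in>UNIV. a k * complex_of_real (X k \<omega> * X l \<omega>))))" for \<omega>
  proof -
    have "(complex_of_real (F \<omega>) - (\<Sum>k\<in>UNIV. a k * complex_of_real (X k \<omega>))) * cnj (\<Sum>l\<in>UNIV. d l * complex_of_real (X l \<omega>))
      = (\<Sum>l\<in>UNIV. (complex_of_real (F \<omega>) - (\<Sum>k\<in>UNIV. a k * complex_of_real (X k \<omega>))) * (cnj (d l) * complex_of_real (X l \<omega>)))"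
      by (simp add: sum_distrib_left)
    also have "\<dots> = (\<Sum>l\<in>UNIV. cnj (d l) * (complex_of_real (F \<omega> * X l \<omega>) - (\<Sum>k\<in>UNIV. a k * complex_of_real (X k \<omega> * X l \<omega>))))"
    proof (rule sum.cong[OF refl])
      fix l
      have "(\<Sum>k\<in>UNIV. a k * complex_of_real (X k \<omega>)) * complex_of_real (X l \<omega>) = (\<Sum>k\<in>UNIV. a k * complex_of_real (X k \<omega> * X l \<omega>))"
        by (simp add: sum_distrib_right mult.assoc)
      then show "(complex_of_real (F \<omega>) - (\<Sum>k\<in>UNIV. a k * complex_of_real (X k \<omega>))) * (cnj (d l) * complex_of_real (X l \<omega>))
           = cnj (d l) * (complex_of_real (F \<omega> * X l \<omega>) - (\<Sum>k\<in>UNIV. a k * complex_of_real (X k \<omega> * X l \<omega>)))"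
        by (simp add: algebra_simps)
    qed
    finally show ?thesis .
  qed
  have i2: "integrable M (\<lambda>\<omega>. complex_of_real (X k \<omega> * X l \<omega>))" for k l
    by (rule integrable_of_real[OF int2])
  have iF: "integrable M (\<lambda>\<omega>. complex_of_real (F \<omega> * X l \<omega>))" for l
    by (rule integrable_of_real[OF F])
  have iS: "integrable M (\<lambda>\<omega>. \<Sum>k\<in>UNIV. a k * complex_of_real (X k \<omega> * X l \<omega>))" for l
    using i2 by (intro Bochner_Integration.integrable_sum integrable_mult_right) auto
  have "ipL2 M (\<lambda>\<omega>. complex_of_real (F \<omega>) - (\<Sum>k\<in>UNIV. a k * complex_of_real (X k \<omega>)))
                (\<lambda>\<omega>. \<Sum>l\<in>UNIV. d l * complex_of_real (X l \<omega>))
      = (\<integral>\<omega>. (\<Sum>l\<in>UNIV. cnj (d l) * (complex_of_real (F \<omega> * X l \<omega>) - (\<Sum>k\<in>UNIV. a k * complex_of_real (X k \<omega> * X l \<omega>)))) \<partial>M)"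
    unfolding ipL2_def pw ..
  also have "\<dots> = (\<Sum>l\<in>UNIV. cnj (d l) * ((\<integral>\<omega>. complex_of_real (F \<omega> * X l \<omega>) \<partial>M) - (\<Sum>k\<in>UNIV. a k * (\<integral>\<omega>. complex_of_real (X k \<omega> * X l \<omega>) \<partial>M))))"
    using iF iS i2
    by (simp add: Bochner_Integration.integral_sum Bochner_Integration.integral_diff integrable_mult_right
         Bochner_Integration.integrable_diff del: of_real_mult)
  also have "\<dots> = (\<Sum>l\<in>UNIV. cnj (d l) * (complex_of_real (\<integral>\<omega>. F \<omega> * X l \<omega> \<partial>M) - a l))"
  proof (rule sum.cong[OF refl])
    fix l
    have "(\<Sum>k\<in>UNIV. a k * (\<integral>\<omega>. complex_of_real (X k \<omega> * X l \<omega>) \<partial>M)) = (\<Sum>k\<in>UNIV. if k = l then a k else 0)"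
      by (rule sum.cong[OF refl]) (simp only: integral_complex_of_real orth, simp)
    then show "cnj (d l) * ((\<integral>\<omega>. complex_of_real (F \<omega> * X l \<omega>) \<partial>M) - (\<Sum>k\<in>UNIV. a k * (\<integral>\<omega>. complex_of_real (X k \<omega> * X l \<omega>) \<partial>M)))
         = cnj (d l) * (complex_of_real (\<integral>\<omega>. F \<omega> * X l \<omega> \<partial>M) - a l)"
      by (simp only: integral_complex_of_real, simp)
  qed
  finally show ?thesis .
qed

lemma intc1: "integrable M (\<lambda>\<omega>. complex_of_real (X k \<omega>))"
  by (rule integrable_of_real[OF int1])

lemma polyG1_E:
  assumes "g \<in> polyG M X 1"
  obtains d where "g = (\<lambda>\<omega>. \<Sum>k\<in>UNIV. d k * complex_of_real (X k \<omega>))"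
proof -
  have g1: "g \<in> polyF X 1" and orth0: "\<forall>h\<in>polyF X 0. ipL2 M g h = 0" using assms by (auto simp: polyG_def)
  obtain c0 d where g: "g = (\<lambda>\<omega>. c0 + (\<Sum>k\<in>UNIV. d k * complex_of_real (X k \<omega>)))"
    using g1 by (rule polyF1_E)
  have "ipL2 M g (\<lambda>_. 1) = 0" using orth0 const_polyF0 by blast
  moreover have "ipL2 M g (\<lambda>_. 1) = c0"
    unfolding ipL2_def g using intc1
    by (simp add: Bochner_Integration.integral_add Bochner_Integration.integral_sum intc E0 meas1
      Bochner_Integration.integrable_sum)
  ultimately have "c0 = 0" by simp
  then show ?thesis using that g by simp
qed

lemma lin_polyG1: "(\<lambda>\<omega>. \<Sum>k\<in>UNIV. d k * complex_of_real (X k \<omega>)) \<in> polyG M X 1"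
proof -
  have "ipL2 M (\<lambda>\<omega>. \<Sum>k\<in>UNIV. d k * complex_of_real (X k \<omega>)) h = 0" if "h \<in> polyF X 0" for h
  proof -
    obtain e where e: "h = (\<lambda>_. e)" using \<open>h \<in> polyF X 0\<close> by (rule polyF0_E)
    show ?thesis unfolding ipL2_def e using intc1
      by (simp add: Bochner_Integration.integral_sum E0 Bochner_Integration.integrable_sum sum_distrib_right[symmetric])
  qed
  then show ?thesis using lin_polyF1 by (simp add: polyG_def)
qed

lemma projG1:
  assumes F: "\<And>l. integrable M (\<lambda>\<omega>. F \<omega> * X l \<omega>)"
  shows "projG M X 1 (\<lambda>\<omega>. complex_of_real (F \<omega>))
       = (\<lambda>\<omega>. \<Sum>k\<in>UNIV. complex_of_real (\<integral>\<omega>. F \<omega> * X k \<omega> \<partial>M) * complex_of_real (X k \<omega>))"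
  unfolding projG_def
proof (rule some_equality, intro conjI ballI)
  show "(\<lambda>\<omega>. \<Sum>k\<in>UNIV. complex_of_real (\<integral>\<omega>. F \<omega> * X k \<omega> \<partial>M) * complex_of_real (X k \<omega>)) \<in> polyG M X 1"
    by (rule lin_polyG1)
  fix h assume "h \<in> polyG M X 1"
  then obtain d where h: "h = (\<lambda>\<omega>. \<Sum>k\<in>UNIV. d k * complex_of_real (X k \<omega>))" by (rule polyG1_E)
  show "ipL2 M (\<lambda>\<omega>. complex_of_real (F \<omega>) - (\<Sum>k\<in>UNIV. complex_of_real (\<integral>\<omega>. F \<omega> * X k \<omega> \<partial>M) * complex_of_real (X k \<omega>))) h = 0"
    unfolding h ipL2_lin[OF F] by simp
next
  fix g assume g: "g \<in> polyG M X 1 \<and> (\<forall>h\<in>polyG M X 1. ipL2 M (\<lambda>\<omega>. complex_of_real (F \<omega>) - g \<omega>) h = 0)"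
  then obtain d where gd: "g = (\<lambda>\<omega>. \<Sum>k\<in>UNIV. d k * complex_of_real (X k \<omega>))" using polyG1_E by blast
  have "d l = complex_of_real (\<integral>\<omega>. F \<omega> * X l \<omega> \<partial>M)" for l
  proof -
    have "ipL2 M (\<lambda>\<omega>. complex_of_real (F \<omega>) - g \<omega>) (\<lambda>\<omega>. \<Sum>k\<in>UNIV. (if k = l then 1 else 0) * complex_of_real (X k \<omega>)) = 0"
      using g lin_polyG1[of "\<lambda>k. if k = l then 1 else 0"] by blast
    then have "(\<Sum>k\<in>UNIV. cnj (if k = l then 1 else 0) * (complex_of_real (\<integral>\<omega>. F \<omega> * X k \<omega> \<partial>M) - d k)) = 0"
      unfolding gd ipL2_lin[OF F] .
    moreover have "(\<Sum>k\<in>UNIV. cnj (if k = l then 1 else 0) * (complex_of_real (\<integral>\<omega>. F \<omega> * X k \<omega> \<partial>M) - d k))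
       = (\<Sum>k\<in>UNIV. if k = l then complex_of_real (\<integral>\<omega>. F \<omega> * X k \<omega> \<partial>M) - d k else 0)"
      by (rule sum.cong) auto
    ultimately show ?thesis by simp
  qed
  then show "g = (\<lambda>\<omega>. \<Sum>k\<in>UNIV. complex_of_real (\<integral>\<omega>. F \<omega> * X k \<omega> \<partial>M) * complex_of_real (X k \<omega>))"
    unfolding gd by simp
qed

lemma pdeg_one: "pdeg X (\<lambda>_. 1) = 0"
  unfolding pdeg_def by (rule Least_eq_0) (rule const_polyF0)

lemma xc_polyF1: "(\<lambda>\<omega>. complex_of_real (X j \<omega>)) \<in> polyF X 1"
proof -
  have "(\<lambda>\<omega>. complex_of_real (X j \<omega>)) = (\<lambda>\<omega>. \<Sum>k\<in>UNIV. (if k = j then 1 else 0) * complex_of_real (X k \<omega>))"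
  proof
    fix \<omega>
    have "(\<Sum>k\<in>UNIV. (if k = j then 1 else 0) * complex_of_real (X k \<omega>)) = (\<Sum>k\<in>UNIV. if k = j then complex_of_real (X k \<omega>) else 0)"
      by (rule sum.cong) auto
    then show "complex_of_real (X j \<omega>) = (\<Sum>k\<in>UNIV. (if k = j then 1 else 0) * complex_of_real (X k \<omega>))" by simp
  qed
  then show ?thesis using lin_polyF1 by metis
qed

lemma xc_not0: "(\<lambda>\<omega>. complex_of_real (X j \<omega>)) \<notin> polyF X 0"
proof
  assume "(\<lambda>\<omega>. complex_of_real (X j \<omega>)) \<in> polyF X 0"
  then obtain c where c: "(\<lambda>\<omega>. complex_of_real (X j \<omega>)) = (\<lambda>_. c)" by (rule polyF0_E)
  then have xj: "X j = (\<lambda>_. Re c)" by (metis Re_complex_of_real)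
  have "Re c = 0" using E0[of j] unfolding xj by (simp add: meas1)
  then have "integral\<^sup>L M (\<lambda>\<omega>. X j \<omega> * X j \<omega>) = 0" unfolding xj by simp
  then show False using orth[of j j] by simp
qed

lemma pdeg_xc: "pdeg X (\<lambda>\<omega>. complex_of_real (X j \<omega>)) = 1"
  unfolding pdeg_def
proof (rule Least_equality)
  show "(\<lambda>\<omega>. complex_of_real (X j \<omega>)) \<in> polyF X 1" by (rule xc_polyF1)
  fix y assume "(\<lambda>\<omega>. complex_of_real (X j \<omega>)) \<in> polyF X y"
  then show "1 \<le> y" using xc_not0[of j] by (cases y) auto
qed

lemma opU_one: "opU M X i (\<lambda>_. 1) = (\<lambda>_. 0)"
proof -
  have p1: "projG M X 0 (\<lambda>_. 1) = (\<lambda>_. 1)"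
    by (subst projG0) (simp_all add: intc meas1)
  have p2: "projG M X 0 (\<lambda>\<omega>. complex_of_real (X i \<omega>)) = (\<lambda>_. 0)"
    by (subst projG0[OF intc1]) (simp add: E0)
  show ?thesis
    unfolding opU_def aMinus_def aZero_def pdeg_one
    by (simp add: p1 mulX_def p2)
qed

lemma sum_atMost1: "(\<Sum>n\<le>(1::nat). f n) = f 0 + f 1"
  by (simp add: atMost_Suc ac_simps)

lemma opU_xc: "opU M X i (\<lambda>\<omega>. complex_of_real (X j \<omega>))
   = (\<lambda>\<omega>. complex_of_real (if i = j then 1 else 0)
        + (\<Sum>k\<in>UNIV. complex_of_real (\<integral>\<omega>. X i \<omega> * X j \<omega> * X k \<omega> \<partial>M) * complex_of_real (X k \<omega>)) / 2)"
proof -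
  have q1: "projG M X 1 (\<lambda>\<omega>. complex_of_real (X j \<omega>)) = (\<lambda>\<omega>. complex_of_real (X j \<omega>))"
  proof -
    have "projG M X 1 (\<lambda>\<omega>. complex_of_real (X j \<omega>)) = (\<lambda>\<omega>. \<Sum>k\<in>UNIV. complex_of_real (\<integral>\<omega>. X j \<omega> * X k \<omega> \<partial>M) * complex_of_real (X k \<omega>))"
      by (rule projG1[OF int2])
    also have "\<dots> = (\<lambda>\<omega>. \<Sum>k\<in>UNIV. if k = j then complex_of_real (X k \<omega>) else 0)"
      by (rule ext, rule sum.cong) (auto simp: orth)
    finally show ?thesis by simp
  qed
  have q0: "projG M X 0 (\<lambda>\<omega>. complex_of_real (X j \<omega>)) = (\<lambda>_. 0)"
    by (subst projG0[OF intc1]) (simp add: E0)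
  have m0: "mulX X i (\<lambda>_. 0) = (\<lambda>_. 0)" by (simp add: mulX_def)
  have z0: "projG M X 0 (\<lambda>_. 0) = (\<lambda>_. 0)" by (subst projG0) (simp_all add: intc)
  have mij: "mulX X i (\<lambda>\<omega>. complex_of_real (X j \<omega>)) = (\<lambda>\<omega>. complex_of_real (X i \<omega> * X j \<omega>))"
    by (simp add: mulX_def)
  have a1: "projG M X 0 (\<lambda>\<omega>. complex_of_real (X i \<omega> * X j \<omega>)) = (\<lambda>_. complex_of_real (if i = j then 1 else 0))"
    by (subst projG0[OF integrable_of_real[OF int2]]) (simp only: integral_complex_of_real orth)
  have a2: "projG M X 1 (\<lambda>\<omega>. complex_of_real (X i \<omega> * X j \<omega>)) = (\<lambda>\<omega>. \<Sum>k\<in>UNIV. complex_of_real (\<integral>\<omega>. X i \<omega> * X j \<omega> * X k \<omega> \<partial>M) * complex_of_real (X k \<omega>))"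
    by (rule projG1[OF int3])
  show ?thesis
    unfolding opU_def aMinus_def aZero_def pdeg_xc sum_atMost1
    by (simp add: q1 q0 m0 z0 mij a1 a2 q1[unfolded One_nat_def] a1[unfolded of_real_mult] a2[unfolded of_real_mult One_nat_def])
qed

end


theorem mainTheorem3:
  fixes M :: "'a measure" and X :: "'i::finite \<Rightarrow> 'a \<Rightarrow> real"
    and \<alpha> :: "'i \<Rightarrow> 'i \<Rightarrow> 'i \<Rightarrow> real" and \<beta> :: "'i \<Rightarrow> 'i \<Rightarrow> real"
  assumes "prob_space M"
    and "finite_moments M X"
    and "meixner_rel M X \<alpha> \<beta>"
    and "nondegenerate M X"
    and "\<And>k. integral\<^sup>L M (X k) = 0"
    and "\<And>i j. integral\<^sup>L M (\<lambda>\<omega>. X i \<omega> * X j \<omega>) = (if i = j then 1 else 0)"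
  shows "\<forall>i j k. integral\<^sup>L M (\<lambda>\<omega>. X i \<omega> * X j \<omega> * X k \<omega>) = 2 * \<alpha> i j k"
proof (intro allI)
  fix i j l
  note P = assms(1) and fm = assms(2) and E0 = assms(5) and orth = assms(6)
  define m where "m k = integral\<^sup>L M (\<lambda>\<omega>. X i \<omega> * X j \<omega> * X k \<omega>)" for k
  define e where "e k = m k / 2 - \<alpha> i j k" for k
  define c where "c = (if i = j then 1 else 0) - \<beta> i j"
  define G where "G \<omega> = c + (\<Sum>k\<in>UNIV. e k * X k \<omega>)" for \<omega>
  have one: "(\<lambda>_. 1) \<in> polyAll X" unfolding polyAll_def using const_polyF0 by blast
  have rel: "AE \<omega> in M. opU M X i (mulX X j (\<lambda>_. 1)) \<omega> - mulX X j (opU M X i (\<lambda>_. 1)) \<omega> =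
      (\<Sum>k\<in>UNIV. complex_of_real (\<alpha> i j k) * mulX X k (\<lambda>_. 1) \<omega>) + complex_of_real (\<beta> i j) * 1"
    using assms(3) one unfolding meixner_rel_def by blast
  have mj: "mulX X j (\<lambda>_. 1) = (\<lambda>\<omega>. complex_of_real (X j \<omega>))" by (simp add: mulX_def)
  have AEG: "AE \<omega> in M. G \<omega> = 0"
    using rel
  proof (rule eventually_mono)
    fix \<omega>
    assume h: "opU M X i (mulX X j (\<lambda>_. 1)) \<omega> - mulX X j (opU M X i (\<lambda>_. 1)) \<omega> =
      (\<Sum>k\<in>UNIV. complex_of_real (\<alpha> i j k) * mulX X k (\<lambda>_. 1) \<omega>) + complex_of_real (\<beta> i j) * 1"
    have s1: "(\<Sum>k\<in>UNIV. A k) / 2 - (\<Sum>k\<in>UNIV. B k) = (\<Sum>k\<in>UNIV. A k / 2 - B k)" for A B :: "'i \<Rightarrow> complex"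
      by (simp add: sum_divide_distrib sum_subtractf)
    have s2: "complex_of_real (\<Sum>k\<in>UNIV. e k * X k \<omega>) = (\<Sum>k\<in>UNIV. complex_of_real (m k) * complex_of_real (X k \<omega>)) / 2
        - (\<Sum>k\<in>UNIV. complex_of_real (\<alpha> i j k) * complex_of_real (X k \<omega>))"
      unfolding s1 of_real_sum by (rule sum.cong[OF refl]) (simp add: e_def algebra_simps)
    have "complex_of_real (G \<omega>) = opU M X i (mulX X j (\<lambda>_. 1)) \<omega> - mulX X j (opU M X i (\<lambda>_. 1)) \<omega> -
      ((\<Sum>k\<in>UNIV. complex_of_real (\<alpha> i j k) * mulX X k (\<lambda>_. 1) \<omega>) + complex_of_real (\<beta> i j) * 1)"
      unfolding mj opU_one[OF P fm E0 orth] opU_xc[OF P fm E0 orth] G_def of_real_add s2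
      by (simp add: c_def m_def mulX_def)
    then show "G \<omega> = 0" using h by simp
  qed
  have measG: "G \<in> borel_measurable M" unfolding G_def[abs_def] using measX[OF P fm E0 orth] by measurable
  have "integral\<^sup>L M (\<lambda>\<omega>. G \<omega> * X l \<omega>) = integral\<^sup>L M (\<lambda>\<omega>. 0)"
    using AEG measG measX[OF P fm E0 orth, of l] by (intro integral_cong_AE) auto
  then have z: "integral\<^sup>L M (\<lambda>\<omega>. G \<omega> * X l \<omega>) = 0" by simp
  have "integral\<^sup>L M (\<lambda>\<omega>. G \<omega> * X l \<omega>) = integral\<^sup>L M (\<lambda>\<omega>. c * X l \<omega> + (\<Sum>k\<in>UNIV. e k * (X k \<omega> * X l \<omega>)))"
    unfolding G_def by (simp add: algebra_simps sum_distrib_left sum_distrib_right)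
  also have "\<dots> = c * integral\<^sup>L M (X l) + (\<Sum>k\<in>UNIV. e k * integral\<^sup>L M (\<lambda>\<omega>. X k \<omega> * X l \<omega>))"
    using int1[OF P fm E0 orth] int2[OF P fm E0 orth]
    by (simp add: Bochner_Integration.integral_add Bochner_Integration.integral_sum Bochner_Integration.integrable_sum)
  also have "\<dots> = e l"
    by (simp add: E0 orth if_distrib cong: if_cong)
  finally have "e l = 0" using z by simp
  then show "integral\<^sup>L M (\<lambda>\<omega>. X i \<omega> * X j \<omega> * X l \<omega>) = 2 * \<alpha> i j l"
    unfolding e_def m_def by simp
qed

end
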